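(* For integers $n\ge k\ge1$ let $A_{n,k}=\{(a_1,\dots,a_k)\in\mathbb Z^k:a_1,\dots,a_k\ge1,\ \sum_{i=1}^ka_i=n\}$ and $S_{n,k}=\sum_{(a_1,\dots,a_k)\in A_{n,k}}\prod_{i=1}^k\frac1{a_i}$. Then $$S_{n,k}\le\frac{(3\log(n+1))^{k-1}}{n}\quad\text{for all }n\ge k\ge1.$$ *)

theory Defs
  imports Complex_Main
begin

definition A_set :: "nat \<Rightarrow> nat \<Rightarrow> nat list set" where
  "A_set n k = {as. length as = k \<and> (\<forall>a\<in>set as. a \<ge> 1) \<and> sum_list as = n}"

definition S_sum :: "nat \<Rightarrow> nat \<Rightarrow> real" where
  "S_sum n k = (\<Sum>as\<in>A_set n k. \<Prod>i<k. 1 / real (as ! i))"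

end

theory Submission
  imports Defs "HOL-Analysis.Harmonic_Numbers"
begin

lemma finite_A: "finite (A_set n k)"
proof -
  have "A_set n k \<subseteq> {xs. set xs \<subseteq> {0..n} \<and> length xs = k}"
    unfolding A_set_def using member_le_sum_list by fastforce
  moreover have "finite {xs. set xs \<subseteq> {0..n} \<and> length xs = k}"
    by (rule finite_lists_length_eq) simp
  ultimately show ?thesis by (rule finite_subset)
qed

lemma A_zero: "k \<ge> 1 \<Longrightarrow> A_set 0 k = {}"
  unfolding A_set_def by (cases k) (auto simp: sum_list_eq_0_iff length_Suc_conv)

lemma S_zero: "k \<ge> 1 \<Longrightarrow> S_sum 0 k = 0"
  unfolding S_sum_def by (simp add: A_zero)

lemma A_one: "n \<ge> 1 \<Longrightarrow> A_set n 1 = {[n]}"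
  unfolding A_set_def by (auto simp: length_Suc_conv)

lemma S_one: "n \<ge> 1 \<Longrightarrow> S_sum n 1 = 1 / real n"
  unfolding S_sum_def using A_one[of n] by simp

lemma A_Suc: "A_set n (Suc k) = (\<lambda>(a,t). a # t) ` (SIGMA a:{1..n}. A_set (n-a) k)"
proof (rule set_eqI)
  fix xs
  show "xs \<in> A_set n (Suc k) \<longleftrightarrow> xs \<in> (\<lambda>(a,t). a # t) ` (SIGMA a:{1..n}. A_set (n-a) k)"
  proof
    assume "xs \<in> A_set n (Suc k)"
    then obtain a t where xs: "xs = a # t" "length t = k" "a \<ge> 1" "\<forall>b\<in>set t. b \<ge> 1" "a + sum_list t = n"
      unfolding A_set_def by (auto simp: length_Suc_conv)
    then have "(a, t) \<in> (SIGMA a:{1..n}. A_set (n-a) k)" unfolding A_set_def by auto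
    then show "xs \<in> (\<lambda>(a,t). a # t) ` (SIGMA a:{1..n}. A_set (n-a) k)" using xs by force
  next
    assume "xs \<in> (\<lambda>(a,t). a # t) ` (SIGMA a:{1..n}. A_set (n-a) k)"
    then show "xs \<in> A_set n (Suc k)" unfolding A_set_def by auto
  qed
qed

lemma S_Suc: "S_sum n (Suc k) = (\<Sum>a=1..n. 1 / real a * S_sum (n-a) k)"
proof -
  have inj: "inj_on (\<lambda>(a,t). a # t) (SIGMA a:{1..n}. A_set (n-a) k)"
    by (auto simp: inj_on_def)
  have "S_sum n (Suc k) = (\<Sum>p\<in>(SIGMA a:{1..n}. A_set (n-a) k). \<Prod>i<Suc k. 1 / real (((\<lambda>(a,t). a # t) p) ! i))"
    unfolding S_sum_def A_Suc by (subst sum.reindex[OF inj]) (simp add: o_def)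
  also have "\<dots> = (\<Sum>a=1..n. \<Sum>t\<in>A_set (n-a) k. \<Prod>i<Suc k. 1 / real ((a # t) ! i))"
    by (subst sum.Sigma) (auto simp: finite_A intro!: sum.cong)
  also have "\<dots> = (\<Sum>a=1..n. \<Sum>t\<in>A_set (n-a) k. 1 / real a * (\<Prod>i<k. 1 / real (t ! i)))"
    by (simp del: prod.lessThan_Suc add: prod.lessThan_Suc_shift)
  also have "\<dots> = (\<Sum>a=1..n. 1 / real a * S_sum (n-a) k)"
    unfolding S_sum_def by (simp add: sum_distrib_left)
  finally show ?thesis .
qed

definition h :: "nat \<Rightarrow> real" where "h m = (\<Sum>a=1..m. 1 / real a)"

lemma ln_lower: "x > 0 \<Longrightarrow> 1 - 1/x \<le> ln (x::real)"
  using ln_le_minus_one[of "1/x"] by (simp add: ln_div)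

lemma h_bound: "h m \<le> 3/2 * ln (real m + 2)"
proof (induction m rule: nat_less_induct)
  case (1 m)
  have l2: "2/3 \<le> ln (2::real)" by (rule ln2_ge_two_thirds)
  have l4: "ln (4::real) = 2 * ln 2"
    using ln_realpow[of 2 2] by simp
  have m3: "ln (2::real) \<le> ln 3" "ln (4::real) \<le> ln 5" by simp_all
  have l3: "2/3 \<le> ln (3::real)" using l2 m3 by linarith
  show ?case
  proof (cases "m \<le> 3")
    case True
    then have "m = 0 \<or> m = 1 \<or> m = 2 \<or> m = 3" by auto
    then show ?thesis
    proof (elim disjE)
      assume "m = 1" then show ?thesis using l3 by (simp add: h_def)
    next
      assume "m = 2"
      then have "h m = 1 + 1/2" by (simp add: h_def numeral_eq_Suc)
      then show ?thesis using \<open>m = 2\<close> l2 l4 by simp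
    next
      assume "m = 3"
      then have "h m = 1 + 1/2 + 1/3" by (simp add: h_def numeral_eq_Suc)
      then show ?thesis using \<open>m = 3\<close> l2 l4 m3 by simp
    qed (simp add: h_def)
  next
    case False
    then obtain p where p: "m = Suc p" "p \<ge> 3" by (cases m) auto
    have IH: "h p \<le> 3/2 * ln (real p + 2)" using 1 p by auto
    have hs: "h m = h p + 1 / (real p + 1)" using p by (simp add: h_def)
    have "ln (real m + 2) - ln (real p + 2) = ln ((real p + 3)/(real p + 2))"
      using p by (simp add: ln_div)
    also have "\<dots> \<ge> 1 - (real p + 2)/(real p + 3)"
      using ln_lower[of "(real p + 3)/(real p + 2)"] by simp
    finally have d: "ln (real m + 2) - ln (real p + 2) \<ge> 1 / (real p + 3)"
      by (simp add: field_simps)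
    have "1 / (real p + 1) \<le> 3/2 * (1 / (real p + 3))"
      using p by (simp add: field_simps)
    then show ?thesis using IH hs d by linarith
  qed
qed

lemma recip_sum: "n \<ge> 1 \<Longrightarrow> (\<Sum>a=1..n. 1 / (real a * real (n-a))) = 2 * h (n-1) / real n"
proof -
  assume n: "n \<ge> 1"
  have "(\<Sum>a=1..n. 1 / (real a * real (n-a))) = (\<Sum>a=1..n-1. 1 / (real a * real (n-a)))"
    using n by (cases n) (auto simp: sum.atLeast_Suc_atMost_Suc_shift)
  also have "\<dots> = (\<Sum>a=1..n-1. (1 / real a + 1 / real (n-a)) / real n)"
    by (rule sum.cong) (auto simp: field_simps of_nat_diff)
  also have "\<dots> = ((\<Sum>a=1..n-1. 1 / real a) + (\<Sum>a=1..n-1. 1 / real (n-a))) / real n"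
    by (simp only: sum_divide_distrib[symmetric] sum.distrib)
  also have "(\<Sum>a=1..n-1. 1 / real (n-a)) = (\<Sum>a=1..n-1. 1 / real a)"
    by (rule sum.reindex_bij_witness[of _ "\<lambda>a. n - a" "\<lambda>a. n - a"]) auto
  finally show ?thesis by (simp add: h_def)
qed


lemma main_bound: "k \<ge> 1 \<Longrightarrow> S_sum n k \<le> (3 * ln (real n + 1)) ^ (k - 1) / real n"
proof (induction k arbitrary: n rule: nat_induct_at_least)
  case base
  show ?case using S_one[of n] S_zero[of 1] by (cases "n = 0") auto
next
  case (Suc k)
  show ?case
  proof (cases "n = 0")
    case True then show ?thesis by (simp add: S_zero)
  next
    case False
    then have n: "n \<ge> 1" by simp
    define L where "L = 3 * ln (real n + 1)"
    have L0: "L \<ge> 0" unfolding L_def by simp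
    have "S_sum n (Suc k) = (\<Sum>a=1..n. 1 / real a * S_sum (n-a) k)" by (rule S_Suc)
    also have "\<dots> \<le> (\<Sum>a=1..n. 1 / real a * (L ^ (k - 1) / real (n - a)))"
    proof (rule sum_mono)
      fix a assume a: "a \<in> {1..n}"
      have "S_sum (n-a) k \<le> (3 * ln (real (n-a) + 1)) ^ (k - 1) / real (n-a)" by (rule Suc.IH)
      also have "\<dots> \<le> L ^ (k - 1) / real (n-a)"
        unfolding L_def
        by (intro divide_right_mono power_mono mult_left_mono) (use a in auto)
      finally show "1 / real a * S_sum (n-a) k \<le> 1 / real a * (L ^ (k - 1) / real (n - a))"
        by (intro mult_left_mono) auto
    qed
    also have "\<dots> = L ^ (k - 1) * (\<Sum>a=1..n. 1 / (real a * real (n-a)))"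
      by (simp add: sum_distrib_left)
    also have "\<dots> = L ^ (k - 1) * (2 * h (n-1) / real n)" using recip_sum[OF n] by simp
    also have "\<dots> \<le> L ^ (k - 1) * (L / real n)"
    proof (intro mult_left_mono divide_right_mono)
      have "h (n-1) \<le> 3/2 * ln (real (n-1) + 2)" by (rule h_bound)
      also have "real (n-1) + 2 = real n + 1" using n by (simp add: of_nat_diff)
      finally show "2 * h (n-1) \<le> L" unfolding L_def by simp
    qed (use L0 in auto)
    also have "\<dots> = L ^ (Suc k - 1) / real n"
      using Suc.hyps by (cases k) auto
    finally show ?thesis unfolding L_def .
  qed
qed

theorem lemma9p1:
  fixes n k :: nat
  assumes "1 \<le> k" and "k \<le> n"
  shows "S_sum n k \<le> (3 * ln (real n + 1)) ^ (k - 1) / real n"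
  using main_bound assms(1) by blast

end
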